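(* Let $\mathcal{A}$ be a quantum query algorithm with a $q$-bit classical witness deciding spectral Forrelation (as described in the context) that makes $t$ queries to $S$ and $t$ queries to $U$. Let $(S,U)$ be at least $\frac{59}{100}$-spectrally Forrelated, let $\Delta$ be a subset of the set of elements of $S$ such that $(\Delta,U)$ is at most $\frac{57}{100}$-spectrally Forrelated, and let $w$ be a witness such that $\mathcal{A}^{(S,U)}(w)$ accepts with probability at least $2/3$. Then $\mathsf{Sampler}^U(w,\Delta)$ makes $t$ queries to $U$, no queries to $S$, and outputs an element of $S\setminus\Delta$ with probability at least $\frac{1}{36t^2}$.
   Context: For sets $S,U\subseteq\{0,1\}^n$ (multisets are treated as their underlying sets), with $\Pi_S=\sum_{x\in S}|x\rangle\langle x|$, $(S,U)$ is $\alpha$-spectrally Forrelated for $\alpha=\|\Pi_UH^{\otimes n}\Pi_S\|_{\mathrm{op}}^2$. The algorithm $\mathcal{A}$ satisfies: if $(S,U)$ is at least $\frac{59}{100}$-spectrally Forrelated, some $w\in\{0,1\}^q$ makes $\mathcal{A}^{(S,U)}(w)$ accept with probability $\ge2/3$; if at most $\frac{57}{100}$-spectrally Forrelated, every $w$ is accepted with probability $\le1/3$. Oracles are phase oracles, e.g. $\mathcal{O}_S|b,x\rangle|z\rangle=(-1)^{b\cdot\delta(x\in S)}|b,x\rangle|z\rangle$. Write the state of $\mathcal{A}^{(S,U)}(w)$ before its final measurement of the first qubit as $V_t\mathcal{O}_SV_{t-1}\mathcal{O}_S\cdots\mathcal{O}_SV_0|w,0\rangle$, where the unitaries $V_j$ include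 the queries to $U$. $\mathsf{Sampler}^U(w,\Delta)$: sample $j\in\{0,\dots,t-1\}$ uniformly; prepare $V_j\mathcal{O}_\Delta V_{j-1}\mathcal{O}_\Delta\cdots\mathcal{O}_\Delta V_0|w,0\rangle$ where $\mathcal{O}_\Delta|b,x\rangle|z\rangle=(-1)^{b\cdot\delta(x\in\Delta)}|b,x\rangle|z\rangle$; measure in the standard basis obtaining $(b,x,z)$; if $x\in\Delta$ output the lexicographically first string not in $\Delta$, else output $x$. *)

theory Defs
  imports Complex_Main "HOL-Library.List_Lexorder"
begin

text \<open>n-bit strings are boolean lists of length n (True = 1).
 Basis states of the algorithm: (b, x, z) with b the first qubit, x an n-bit
 register and z an m-bit workspace register.\<close>

definition strings :: "nat \<Rightarrow> bool list set" where
  "strings n = {x. length x = n}"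

type_synonym basis = "bool \<times> bool list \<times> bool list"
type_synonym state = "basis \<Rightarrow> complex"

definition carrier :: "nat \<Rightarrow> nat \<Rightarrow> basis set" where
  "carrier n m = {(b, x, z). length x = n \<and> length z = m}"

definition vnorm :: "nat \<Rightarrow> (bool list \<Rightarrow> complex) \<Rightarrow> real" where
  "vnorm n v = sqrt (\<Sum>x\<in>strings n. (cmod (v x))\<^sup>2)"

definition proj :: "bool list set \<Rightarrow> (bool list \<Rightarrow> complex) \<Rightarrow> (bool list \<Rightarrow> complex)" where
  "proj T v = (\<lambda>x. if x \<in> T then v x else 0)"

definition ip :: "bool list \<Rightarrow> bool list \<Rightarrow> nat" where
  "ip x y = length (filter (\<lambda>p. fst p \<and> snd p) (zip x y))"

definition hadamard :: "nat \<Rightarrow> (bool list \<Rightarrow> complex) \<Rightarrow> (bool list \<Rightarrow> complex)" where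
  "hadamard n v = (\<lambda>y. if length y = n
      then (\<Sum>x\<in>strings n. (-1) ^ ip x y * v x) / complex_of_real (sqrt (2 ^ n))
      else 0)"

definition spec_forr :: "nat \<Rightarrow> bool list set \<Rightarrow> bool list set \<Rightarrow> real" where
  "spec_forr n S U =
     (SUP v \<in> {v. vnorm n v \<le> 1}. vnorm n (proj U (hadamard n (proj S v)))) ^ 2"

text \<open>A gate is either a fixed (oracle-independent) matrix on the basis, a phase
 query to S, or a phase query to U.\<close>
datatype gate = Gate "basis \<Rightarrow> basis \<Rightarrow> complex" | QueryS | QueryU

definition unitary_on :: "nat \<Rightarrow> nat \<Rightarrow> (basis \<Rightarrow> basis \<Rightarrow> complex) \<Rightarrow> bool" where
  "unitary_on n m M \<longleftrightarrow>
     (\<forall>i\<in>carrier n m. \<forall>j\<in>carrier n m.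
        (\<Sum>k\<in>carrier n m. cnj (M k i) * M k j) = (if i = j then 1 else 0))"

fun wf_gate :: "nat \<Rightarrow> nat \<Rightarrow> gate \<Rightarrow> bool" where
  "wf_gate n m (Gate M) = unitary_on n m M"
| "wf_gate n m QueryS = True"
| "wf_gate n m QueryU = True"

definition mat_apply :: "nat \<Rightarrow> nat \<Rightarrow> (basis \<Rightarrow> basis \<Rightarrow> complex) \<Rightarrow> state \<Rightarrow> state" where
  "mat_apply n m M \<psi> = (\<lambda>i. if i \<in> carrier n m then (\<Sum>j\<in>carrier n m. M i j * \<psi> j) else 0)"

definition phase :: "bool list set \<Rightarrow> state \<Rightarrow> state" where
  "phase T \<psi> = (\<lambda>(b, x, z). (if b \<and> x \<in> T then -1 else 1) * \<psi> (b, x, z))"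

text \<open>O_T as an explicit (oracle-free) gate, for a classically known set T.\<close>
definition phase_gate :: "bool list set \<Rightarrow> gate" where
  "phase_gate T = Gate (\<lambda>i j. if i = j then (if fst i \<and> fst (snd i) \<in> T then -1 else 1) else 0)"

fun apply_gate :: "nat \<Rightarrow> nat \<Rightarrow> bool list set \<Rightarrow> bool list set \<Rightarrow> gate \<Rightarrow> state \<Rightarrow> state" where
  "apply_gate n m S U (Gate M) \<psi> = mat_apply n m M \<psi>"
| "apply_gate n m S U QueryS \<psi> = phase S \<psi>"
| "apply_gate n m S U QueryU \<psi> = phase U \<psi>"

text \<open>Gates are applied left to right (head of list first).\<close>
fun run :: "nat \<Rightarrow> nat \<Rightarrow> bool list set \<Rightarrow> bool list set \<Rightarrow> gate list \<Rightarrow> state \<Rightarrow> state" where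
  "run n m S U [] \<psi> = \<psi>"
| "run n m S U (g # gs) \<psi> = run n m S U gs (apply_gate n m S U g \<psi>)"

definition num_S :: "gate list \<Rightarrow> nat" where
  "num_S gs = length (filter (\<lambda>g. g = QueryS) gs)"

definition num_U :: "gate list \<Rightarrow> nat" where
  "num_U gs = length (filter (\<lambda>g. g = QueryU) gs)"

definition init :: "nat \<Rightarrow> nat \<Rightarrow> bool list \<Rightarrow> state" where
  "init n m w = (\<lambda>i. if i = (False, replicate n False, w @ replicate (m - length w) False)
                     then 1 else 0)"

text \<open>Probability that measuring the first qubit of the final state gives 1 (accept).\<close>
definition acc_prob :: "nat \<Rightarrow> nat \<Rightarrow> bool list set \<Rightarrow> bool list set \<Rightarrow> gate list \<Rightarrow> bool list \<Rightarrow> real" where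
  "acc_prob n m S U gs w =
     (\<Sum>i\<in>carrier n m. if fst i then (cmod (run n m S U gs (init n m w) i))\<^sup>2 else 0)"

definition decides_spec_forr :: "nat \<Rightarrow> nat \<Rightarrow> nat \<Rightarrow> gate list \<Rightarrow> bool" where
  "decides_spec_forr n m q gs \<longleftrightarrow>
     (\<forall>S U. S \<subseteq> strings n \<longrightarrow> U \<subseteq> strings n \<longrightarrow>
        (spec_forr n S U \<ge> 59/100 \<longrightarrow>
           (\<exists>w. length w = q \<and> acc_prob n m S U gs w \<ge> 2/3)) \<and>
        (spec_forr n S U \<le> 57/100 \<longrightarrow>
           (\<forall>w. length w = q \<longrightarrow> acc_prob n m S U gs w \<le> 1/3)))"

text \<open>prefix_before j gs = V_0 O V_1 ... O V_j : all gates before the (j+1)-th S-query.\<close>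
fun prefix_before :: "nat \<Rightarrow> gate list \<Rightarrow> gate list" where
  "prefix_before k [] = []"
| "prefix_before k (g # gs) =
     (if g = QueryS then (if k = 0 then [] else g # prefix_before (k - 1) gs)
      else g # prefix_before k gs)"

definition sampler_gates :: "bool list set \<Rightarrow> nat \<Rightarrow> gate list \<Rightarrow> gate list" where
  "sampler_gates \<Delta> j gs =
     map (\<lambda>g. if g = QueryS then phase_gate \<Delta> else g) (prefix_before j gs)"

definition sampler_out :: "nat \<Rightarrow> bool list set \<Rightarrow> basis \<Rightarrow> bool list" where
  "sampler_out n \<Delta> i = (let x = fst (snd i) in
      if x \<in> \<Delta> then Min {y \<in> strings n. y \<notin> \<Delta>} else x)"

text \<open>Probability that Sampler^U(w,Delta) outputs an element of T
  (j uniform in {0..t-1}, then standard-basis measurement of all registers).\<close>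
definition sampler_prob :: "nat \<Rightarrow> nat \<Rightarrow> bool list set \<Rightarrow> bool list set \<Rightarrow> bool list set
      \<Rightarrow> gate list \<Rightarrow> nat \<Rightarrow> bool list \<Rightarrow> bool list set \<Rightarrow> real" where
  "sampler_prob n m S U \<Delta> gs t w T =
     (\<Sum>j<t. (1 / real t) *
        (\<Sum>i\<in>carrier n m.
           if sampler_out n \<Delta> i \<in> T
           then (cmod (run n m S U (sampler_gates \<Delta> j gs) (init n m w) i))\<^sup>2 else 0))"

end

theory Submission
  imports Defs "HOL-Analysis.L2_Norm" "HOL-Library.Function_Algebras"
begin

lemma finite_carrier: "finite (carrier n m)"
proof -
  have "carrier n m = UNIV \<times> ({x::bool list. set x \<subseteq> UNIV \<and> length x = n} \<times> {z::bool list. set z \<subseteq> UNIV \<and> length z = m})"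
    by (auto simp: carrier_def)
  then show ?thesis using finite_lists_length_eq[of "UNIV::bool set"] by simp
qed

definition sq :: "nat \<Rightarrow> nat \<Rightarrow> state \<Rightarrow> real" where
  "sq n m \<psi> = (\<Sum>i\<in>carrier n m. (cmod (\<psi> i))\<^sup>2)"

definition nrm :: "nat \<Rightarrow> nat \<Rightarrow> state \<Rightarrow> real" where
  "nrm n m \<psi> = L2_set (\<lambda>i. cmod (\<psi> i)) (carrier n m)"

lemma nrm_sq: "nrm n m \<psi> = sqrt (sq n m \<psi>)"
  by (simp add: nrm_def sq_def L2_set_def)

lemma mat_isometry:
  assumes U: "unitary_on n m M"
  shows "sq n m (mat_apply n m M \<psi>) = sq n m \<psi>"
proof -
  let ?C = "carrier n m"
  have "complex_of_real (sq n m (mat_apply n m M \<psi>))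
      = (\<Sum>k\<in>?C. (\<Sum>j\<in>?C. M k j * \<psi> j) * cnj (\<Sum>j'\<in>?C. M k j' * \<psi> j'))"
    unfolding sq_def of_real_sum
    by (intro sum.cong refl) (subst complex_norm_square, simp add: mat_apply_def)
  also have "\<dots> = (\<Sum>k\<in>?C. \<Sum>j'\<in>?C. \<Sum>j\<in>?C. \<psi> j * cnj (\<psi> j') * (cnj (M k j') * M k j))"
    by (simp add: sum_distrib_left sum_distrib_right algebra_simps)
  also have "\<dots> = (\<Sum>j'\<in>?C. \<Sum>k\<in>?C. \<Sum>j\<in>?C. \<psi> j * cnj (\<psi> j') * (cnj (M k j') * M k j))"
    by (rule sum.swap)
  also have "\<dots> = (\<Sum>j'\<in>?C. \<Sum>j\<in>?C. \<Sum>k\<in>?C. \<psi> j * cnj (\<psi> j') * (cnj (M k j') * M k j))"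
    by (intro sum.cong refl sum.swap)
  also have "\<dots> = (\<Sum>j'\<in>?C. \<Sum>j\<in>?C. \<psi> j * cnj (\<psi> j') * (if j' = j then 1 else 0))"
    using U by (simp add: unitary_on_def flip: sum_distrib_left)
  also have "\<dots> = (\<Sum>j\<in>?C. \<psi> j * cnj (\<psi> j))"
    by (simp add: finite_carrier if_distrib cong: if_cong)
  also have "\<dots> = complex_of_real (sq n m \<psi>)"
    unfolding sq_def of_real_sum
    by (intro sum.cong refl) (subst complex_norm_square, simp)
  finally show ?thesis using of_real_eq_iff by blast
qed

lemma phase_sq: "sq n m (phase T \<psi>) = sq n m \<psi>"
  unfolding sq_def by (intro sum.cong refl) (auto simp: phase_def norm_mult)

lemma gate_sq: "wf_gate n m g \<Longrightarrow> sq n m (apply_gate n m S U g \<psi>) = sq n m \<psi>"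
  by (cases g) (auto simp: mat_isometry phase_sq)

lemma gate_lin: "apply_gate n m S U g (\<psi> - \<phi>) = apply_gate n m S U g \<psi> - apply_gate n m S U g \<phi>"
  by (cases g) (auto simp: mat_apply_def phase_def algebra_simps fun_eq_iff sum_subtractf)

lemma run_sq: "\<forall>g\<in>set gs. wf_gate n m g \<Longrightarrow> sq n m (run n m S U gs \<psi>) = sq n m \<psi>"
  by (induction gs arbitrary: \<psi>) (auto simp: gate_sq)

lemma gate_nrm: "wf_gate n m g \<Longrightarrow> nrm n m (apply_gate n m S U g \<psi>) = nrm n m \<psi>"
  by (simp add: nrm_sq gate_sq)

lemma nrm_triangle: "nrm n m (\<psi> + \<phi>) \<le> nrm n m \<psi> + nrm n m \<phi>"
proof -
  have "nrm n m (\<psi> + \<phi>) \<le> L2_set (\<lambda>i. cmod (\<psi> i) + cmod (\<phi> i)) (carrier n m)"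
    unfolding nrm_def by (rule L2_set_mono) (auto simp: norm_triangle_ineq)
  also have "\<dots> \<le> nrm n m \<psi> + nrm n m \<phi>"
    unfolding nrm_def by (rule L2_set_triangle_ineq)
  finally show ?thesis .
qed

definition Pr :: "bool list set \<Rightarrow> bool list set \<Rightarrow> state \<Rightarrow> state" where
  "Pr S D \<chi> = (\<lambda>i. if fst i \<and> fst (snd i) \<in> S - D then \<chi> i else 0)"

lemma phase_diff:
  assumes "D \<subseteq> S"
  shows "nrm n m (phase S \<phi> - phase D \<phi>) = 2 * nrm n m (Pr S D \<phi>)"
proof -
  have "\<And>i. cmod ((phase S \<phi> - phase D \<phi>) i) = 2 * cmod (Pr S D \<phi> i)"
    using assms by (auto simp: phase_def Pr_def)
  then show ?thesis unfolding nrm_def by (simp add: L2_set_right_distrib)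
qed

lemma hybrid:
  assumes "D \<subseteq> S" "\<forall>g\<in>set gs. wf_gate n m g"
  shows "nrm n m (run n m S U gs \<psi> - run n m D U gs \<phi>) \<le> nrm n m (\<psi> - \<phi>)
     + (\<Sum>j<num_S gs. 2 * nrm n m (Pr S D (run n m D U (prefix_before j gs) \<phi>)))"
  using assms(2)
proof (induction gs arbitrary: \<psi> \<phi>)
  case Nil
  then show ?case by (simp add: num_S_def)
next
  case (Cons g gs)
  show ?case
  proof (cases "g = QueryS")
    case True
    have IH: "nrm n m (run n m S U gs (phase S \<psi>) - run n m D U gs (phase D \<phi>)) \<le> nrm n m (phase S \<psi> - phase D \<phi>)
     + (\<Sum>j<num_S gs. 2 * nrm n m (Pr S D (run n m D U (prefix_before j gs) (phase D \<phi>))))"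
      by (rule Cons.IH) (use Cons.prems in auto)
    have "phase S \<psi> - phase D \<phi> = (phase S \<psi> - phase S \<phi>) + (phase S \<phi> - phase D \<phi>)" by simp
    then have "nrm n m (phase S \<psi> - phase D \<phi>) \<le> nrm n m (phase S \<psi> - phase S \<phi>) + nrm n m (phase S \<phi> - phase D \<phi>)"
      by (metis nrm_triangle)
    also have "phase S \<psi> - phase S \<phi> = apply_gate n m S U QueryS (\<psi> - \<phi>)" by (simp add: gate_lin)
    also have "nrm n m \<dots> = nrm n m (\<psi> - \<phi>)" by (rule gate_nrm) simp
    also have "nrm n m (phase S \<phi> - phase D \<phi>) = 2 * nrm n m (Pr S D \<phi>)" using assms(1) by (rule phase_diff)
    finally have A: "nrm n m (phase S \<psi> - phase D \<phi>) \<le> nrm n m (\<psi> - \<phi>) + 2 * nrm n m (Pr S D \<phi>)" .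
    have B: "(\<Sum>j<num_S (g # gs). 2 * nrm n m (Pr S D (run n m D U (prefix_before j (g # gs)) \<phi>)))
       = 2 * nrm n m (Pr S D \<phi>) + (\<Sum>j<num_S gs. 2 * nrm n m (Pr S D (run n m D U (prefix_before j gs) (phase D \<phi>))))"
    proof -
      have "num_S (g # gs) = Suc (num_S gs)" using True by (simp add: num_S_def)
      then show ?thesis using True by (simp only: sum.lessThan_Suc_shift) simp
    qed
    show ?thesis using IH A B by (simp only: True run.simps apply_gate.simps)
  next
    case False
    have wf: "wf_gate n m g" using Cons.prems by simp
    have IH: "nrm n m (run n m S U gs (apply_gate n m S U g \<psi>) - run n m D U gs (apply_gate n m D U g \<phi>))
      \<le> nrm n m (apply_gate n m S U g \<psi> - apply_gate n m D U g \<phi>)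
     + (\<Sum>j<num_S gs. 2 * nrm n m (Pr S D (run n m D U (prefix_before j gs) (apply_gate n m D U g \<phi>))))"
      by (rule Cons.IH) (use Cons.prems in auto)
    have eq: "apply_gate n m D U g = apply_gate n m S U g" using False by (cases g) auto
    have "apply_gate n m S U g \<psi> - apply_gate n m S U g \<phi> = apply_gate n m S U g (\<psi> - \<phi>)" by (simp add: gate_lin)
    then have C: "nrm n m (apply_gate n m S U g \<psi> - apply_gate n m D U g \<phi>) = nrm n m (\<psi> - \<phi>)"
      using eq wf by (simp add: gate_nrm)
    have N: "num_S (g # gs) = num_S gs" using False by (simp add: num_S_def)
    have P: "\<And>j. prefix_before j (g # gs) = g # prefix_before j gs" using False by simp
    show ?thesis using IH C by (simp only: N P run.simps eq)
  qed
qed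

lemma alg:
  fixes a b a' b' :: real
  assumes "a \<ge> 0" "b \<ge> 0" "a' \<ge> 0" "b' \<ge> 0" "a\<^sup>2 + a'\<^sup>2 = 1" "b\<^sup>2 + b'\<^sup>2 = 1"
  shows "(a\<^sup>2 - b\<^sup>2)\<^sup>2 \<le> (a - b)\<^sup>2 + (a' - b')\<^sup>2"
proof -
  define c where "c = a*b + a'*b'"
  define e where "e = a*b' - a'*b"
  define f where "f = a*b' + a'*b"
  have 1: "(a - b)\<^sup>2 + (a' - b')\<^sup>2 = 2 - 2*c"
    using assms unfolding c_def by (simp add: power2_eq_square algebra_simps)
  have 2: "e\<^sup>2 + c\<^sup>2 = 1"
  proof -
    have "e\<^sup>2 + c\<^sup>2 = (a\<^sup>2 + a'\<^sup>2) * (b\<^sup>2 + b'\<^sup>2)"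
      unfolding e_def c_def by (simp add: power2_eq_square algebra_simps)
    then show ?thesis using assms by simp
  qed
  have 3: "f\<^sup>2 + (a*b - a'*b')\<^sup>2 = 1"
  proof -
    have "f\<^sup>2 + (a*b - a'*b')\<^sup>2 = (a\<^sup>2 + a'\<^sup>2) * (b\<^sup>2 + b'\<^sup>2)"
      unfolding f_def by (simp add: power2_eq_square algebra_simps)
    then show ?thesis using assms by simp
  qed
  have 4: "a\<^sup>2 - b\<^sup>2 = e * f"
  proof -
    have "a\<^sup>2 - b\<^sup>2 = a\<^sup>2 * (b\<^sup>2 + b'\<^sup>2) - b\<^sup>2 * (a\<^sup>2 + a'\<^sup>2)" using assms by simp
    also have "\<dots> = e * f" unfolding e_def f_def by (simp add: power2_eq_square algebra_simps)
    finally show ?thesis .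
  qed
  have f1: "f\<^sup>2 \<le> 1" using 3 by (smt (verit) zero_le_power2)
  have "(a\<^sup>2 - b\<^sup>2)\<^sup>2 = e\<^sup>2 * f\<^sup>2" using 4 by (simp add: power_mult_distrib)
  also have "\<dots> \<le> e\<^sup>2" using f1 by (simp add: mult_left_le)
  also have "\<dots> = 1 - c\<^sup>2" using 2 by simp
  also have "\<dots> \<le> 2 - 2*c" using zero_le_power2[of "1 - c"] by (simp add: power2_eq_square algebra_simps)
  finally show ?thesis using 1 by simp
qed

definition acc :: "nat \<Rightarrow> nat \<Rightarrow> state \<Rightarrow> real" where
  "acc n m \<chi> = (\<Sum>i\<in>carrier n m. if fst i then (cmod (\<chi> i))\<^sup>2 else 0)"

lemma L2_sq: "(L2_set f A)\<^sup>2 = (\<Sum>i\<in>A. (f i)\<^sup>2)"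
  unfolding L2_set_def by (simp add: sum_nonneg)

lemma rev_tri:
  "L2_set (\<lambda>i. cmod (\<psi> i)) A \<le> L2_set (\<lambda>i. cmod ((\<psi> - \<phi>) i)) A + L2_set (\<lambda>i. cmod (\<phi> i)) A"
proof -
  have "L2_set (\<lambda>i. cmod (\<psi> i)) A \<le> L2_set (\<lambda>i. cmod ((\<psi> - \<phi>) i) + cmod (\<phi> i)) A"
  proof (rule L2_set_mono)
    fix i show "cmod (\<psi> i) \<le> cmod ((\<psi> - \<phi>) i) + cmod (\<phi> i)"
      using norm_triangle_ineq[of "\<psi> i - \<phi> i" "\<phi> i"] by simp
  qed simp
  also have "\<dots> \<le> L2_set (\<lambda>i. cmod ((\<psi> - \<phi>) i)) A + L2_set (\<lambda>i. cmod (\<phi> i)) A" by (rule L2_set_triangle_ineq)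
  finally show ?thesis .
qed

lemma distinguish:
  assumes "sq n m \<psi> = 1" "sq n m \<phi> = 1"
  shows "acc n m \<psi> - acc n m \<phi> \<le> nrm n m (\<psi> - \<phi>)"
proof -
  let ?C = "carrier n m"
  define C1 where "C1 = {i\<in>?C. fst i}"
  define C0 where "C0 = {i\<in>?C. \<not> fst i}"
  have fin: "finite C1" "finite C0" using finite_carrier unfolding C1_def C0_def by auto
  have CU: "?C = C1 \<union> C0" "C1 \<inter> C0 = {}" unfolding C1_def C0_def by auto
  have split: "(\<Sum>i\<in>?C. g i) = (\<Sum>i\<in>C1. g i) + (\<Sum>i\<in>C0. g i)" for g :: "basis \<Rightarrow> real"
    using CU fin sum.union_disjoint by metis
  define a where "a = L2_set (\<lambda>i. cmod (\<psi> i)) C1"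
  define a' where "a' = L2_set (\<lambda>i. cmod (\<psi> i)) C0"
  define b where "b = L2_set (\<lambda>i. cmod (\<phi> i)) C1"
  define b' where "b' = L2_set (\<lambda>i. cmod (\<phi> i)) C0"
  define d1 where "d1 = L2_set (\<lambda>i. cmod ((\<psi> - \<phi>) i)) C1"
  define d2 where "d2 = L2_set (\<lambda>i. cmod ((\<psi> - \<phi>) i)) C0"
  have accp: "acc n m \<psi> = a\<^sup>2" "acc n m \<phi> = b\<^sup>2"
    unfolding acc_def a_def b_def L2_sq split by (simp_all add: C1_def C0_def)
  have "sq n m \<psi> = a\<^sup>2 + a'\<^sup>2" "sq n m \<phi> = b\<^sup>2 + b'\<^sup>2"
    unfolding sq_def a_def a'_def b_def b'_def L2_sq split by simp_all
  then have n1: "a\<^sup>2 + a'\<^sup>2 = 1" "b\<^sup>2 + b'\<^sup>2 = 1" using assms by simp_all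
  have nd: "(nrm n m (\<psi> - \<phi>))\<^sup>2 = d1\<^sup>2 + d2\<^sup>2"
    unfolding nrm_def d1_def d2_def L2_sq split by simp
  have t1: "a \<le> d1 + b" "b \<le> d1 + a" "a' \<le> d2 + b'" "b' \<le> d2 + a'"
    unfolding a_def b_def a'_def b'_def d1_def d2_def
    using rev_tri[of \<psi> C1 \<phi>] rev_tri[of \<psi> C0 \<phi>] rev_tri[of \<phi> C1 \<psi>] rev_tri[of \<phi> C0 \<psi>]
    by (simp_all add: norm_minus_commute)
  have "(a - b)\<^sup>2 \<le> d1\<^sup>2" "(a' - b')\<^sup>2 \<le> d2\<^sup>2"
    using t1 by (simp_all add: abs_le_square_iff[symmetric] abs_le_iff d1_def d2_def)
  moreover have "(a\<^sup>2 - b\<^sup>2)\<^sup>2 \<le> (a - b)\<^sup>2 + (a' - b')\<^sup>2"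
    by (rule alg[OF _ _ _ _ n1]) (simp_all add: a_def b_def a'_def b'_def)
  ultimately have "(a\<^sup>2 - b\<^sup>2)\<^sup>2 \<le> (nrm n m (\<psi> - \<phi>))\<^sup>2" using nd by linarith
  then have "\<bar>a\<^sup>2 - b\<^sup>2\<bar> \<le> nrm n m (\<psi> - \<phi>)"
    by (metis abs_le_square_iff abs_of_nonneg L2_set_nonneg nrm_def)
  then show ?thesis using accp by linarith
qed


lemma gate_agree:
  assumes "\<forall>i\<in>carrier n m. \<psi> i = \<phi> i"
  shows "\<forall>i\<in>carrier n m.
    apply_gate n m S U (if g = QueryS then phase_gate D else g) \<psi> i = apply_gate n m D U g \<phi> i"
proof (cases g)
  case (Gate M)
  then show ?thesis using assms by (auto simp: mat_apply_def intro!: sum.cong)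
next
  case QueryS
  have "mat_apply n m (\<lambda>i j. if i = j then (if fst i \<and> fst (snd i) \<in> D then -1 else 1) else 0) \<psi> i
        = phase D \<phi> i" if "i \<in> carrier n m" for i
  proof -
    have "mat_apply n m (\<lambda>i j. if i = j then (if fst i \<and> fst (snd i) \<in> D then -1 else 1) else 0) \<psi> i
       = (\<Sum>j\<in>carrier n m. if j = i then (if fst i \<and> fst (snd i) \<in> D then -1 else 1) * \<psi> j else 0)"
      using that unfolding mat_apply_def by (auto intro!: sum.cong)
    also have "\<dots> = (if fst i \<and> fst (snd i) \<in> D then -1 else 1) * \<psi> i"
      using that finite_carrier by (simp add: sum.delta)
    also have "\<dots> = phase D \<phi> i" using that assms by (cases i) (auto simp: phase_def)
    finally show ?thesis .
  qed
  then show ?thesis using QueryS by (simp add: phase_gate_def)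
next
  case QueryU
  then show ?thesis using assms by (auto simp: phase_def)
qed

lemma run_agree:
  assumes "\<forall>i\<in>carrier n m. \<psi> i = \<phi> i"
  shows "\<forall>i\<in>carrier n m.
    run n m S U (map (\<lambda>g. if g = QueryS then phase_gate D else g) hs) \<psi> i = run n m D U hs \<phi> i"
  using assms
proof (induction hs arbitrary: \<psi> \<phi>)
  case Nil then show ?case by simp
next
  case (Cons g hs)
  have "\<forall>i\<in>carrier n m.
    apply_gate n m S U (if g = QueryS then phase_gate D else g) \<psi> i = apply_gate n m D U g \<phi> i"
    by (rule gate_agree[OF Cons.prems])
  then show ?case using Cons.IH by simp
qed

lemma sampler_agree:
  "i \<in> carrier n m \<Longrightarrow> run n m S U (sampler_gates D j gs) \<psi> i = run n m D U (prefix_before j gs) \<psi> i"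
  using run_agree[of n m \<psi> \<psi> S U D "prefix_before j gs"] by (simp add: sampler_gates_def)

lemma init_sq:
  assumes "length w \<le> m"
  shows "sq n m (init n m w) = 1"
proof -
  let ?p = "(False, replicate n False, w @ replicate (m - length w) False)"
  have p: "?p \<in> carrier n m" using assms by (simp add: carrier_def)
  have "sq n m (init n m w) = (\<Sum>i\<in>carrier n m. if i = ?p then 1 else 0)"
    unfolding sq_def init_def by (intro sum.cong) auto
  also have "\<dots> = 1" using p finite_carrier by simp
  finally show ?thesis .
qed

lemma prefix_U: "num_U (prefix_before k gs) \<le> num_U gs"
  by (induction k gs rule: prefix_before.induct) (auto simp: num_U_def)

lemma sampler_counts:
  "num_S (sampler_gates D j gs) = 0 \<and> num_U (sampler_gates D j gs) \<le> num_U gs"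
proof -
  have "num_S (sampler_gates D j gs) = 0"
    by (simp add: num_S_def sampler_gates_def filter_map o_def phase_gate_def)
  moreover have "num_U (sampler_gates D j gs) = num_U (prefix_before j gs)"
    unfolding num_U_def sampler_gates_def filter_map o_def
    by (simp add: phase_gate_def) (metis (mono_tags, lifting) filter_cong gate.distinct(6))
  ultimately show ?thesis using prefix_U by simp
qed


theorem mainTheorem6:
  fixes n m q t :: nat and gs :: "gate list" and S U \<Delta> :: "bool list set" and w :: "bool list"
  assumes "q \<le> m"
    and "\<forall>g\<in>set gs. wf_gate n m g"
    and "num_S gs = t" and "num_U gs = t"
    and "decides_spec_forr n m q gs"
    and "S \<subseteq> strings n" and "U \<subseteq> strings n"
    and "spec_forr n S U \<ge> 59/100"
    and "\<Delta> \<subseteq> S" and "spec_forr n \<Delta> U \<le> 57/100"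
    and "length w = q" and "acc_prob n m S U gs w \<ge> 2/3"
  shows "(\<forall>j<t. num_S (sampler_gates \<Delta> j gs) = 0 \<and> num_U (sampler_gates \<Delta> j gs) \<le> t)
         \<and> sampler_prob n m S U \<Delta> gs t w (S - \<Delta>) \<ge> 1 / (36 * (real t)\<^sup>2)"
proof
  show "\<forall>j<t. num_S (sampler_gates \<Delta> j gs) = 0 \<and> num_U (sampler_gates \<Delta> j gs) \<le> t"
    using sampler_counts assms(4) by metis
next
  let ?C = "carrier n m"
  define \<psi>0 where "\<psi>0 = init n m w"
  define \<psi>S where "\<psi>S = run n m S U gs \<psi>0"
  define \<psi>D where "\<psi>D = run n m \<Delta> U gs \<psi>0"
  have sq0: "sq n m \<psi>0 = 1" unfolding \<psi>0_def using assms(1,11) by (simp add: init_sq)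
  have sqS: "sq n m \<psi>S = 1" unfolding \<psi>S_def using sq0 run_sq[OF assms(2)] by simp
  have sqD: "sq n m \<psi>D = 1" unfolding \<psi>D_def using sq0 run_sq[OF assms(2)] by simp
  have accS: "acc n m \<psi>S \<ge> 2/3" using assms(12) by (simp add: acc_def acc_prob_def \<psi>S_def \<psi>0_def)
  have "\<Delta> \<subseteq> strings n" using assms(6,9) by blast
  then have "acc_prob n m \<Delta> U gs w \<le> 1/3" using assms(5,7,10,11) unfolding decides_spec_forr_def by blast
  then have accD: "acc n m \<psi>D \<le> 1/3" by (simp add: acc_def acc_prob_def \<psi>D_def \<psi>0_def)
  have d: "1/3 \<le> nrm n m (\<psi>S - \<psi>D)" using distinguish[OF sqS sqD] accS accD by linarith
  define p where "p j = nrm n m (Pr S \<Delta> (run n m \<Delta> U (prefix_before j gs) \<psi>0))" for j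
  have "nrm n m (\<psi>S - \<psi>D) \<le> nrm n m (\<psi>0 - \<psi>0) + (\<Sum>j<t. 2 * p j)"
    unfolding \<psi>S_def \<psi>D_def p_def assms(3)[symmetric] by (rule hybrid[OF assms(9,2)])
  moreover have "nrm n m (\<psi>0 - \<psi>0) = 0" by (simp add: nrm_def L2_set_def)
  ultimately have s6: "1/6 \<le> (\<Sum>j<t. p j)" using d by (simp add: sum_distrib_left[symmetric])
  have p0: "p j \<ge> 0" for j by (simp add: p_def nrm_def)
  have tpos: "t > 0" using s6 by (cases t) auto
  have "(\<Sum>j<t. p j) = (\<Sum>j<t. \<bar>p j\<bar> * \<bar>1\<bar>)" using p0 by simp
  also have "\<dots> \<le> L2_set p {..<t} * L2_set (\<lambda>_. 1) {..<t}" by (rule L2_set_mult_ineq)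
  also have "\<dots> = L2_set p {..<t} * sqrt (real t)" by (simp add: L2_set_constant)
  finally have "(1/6)\<^sup>2 \<le> (L2_set p {..<t} * sqrt (real t))\<^sup>2"
    using s6 by (intro power_mono) auto
  also have "\<dots> = (\<Sum>j<t. (p j)\<^sup>2) * real t" by (simp add: power_mult_distrib L2_sq)
  finally have cs: "1 / (36 * real t) \<le> (\<Sum>j<t. (p j)\<^sup>2)" using tpos
    by (simp add: field_simps power2_eq_square)
  have pj: "(p j)\<^sup>2 \<le> (\<Sum>i\<in>?C. if sampler_out n \<Delta> i \<in> S - \<Delta>
           then (cmod (run n m S U (sampler_gates \<Delta> j gs) (init n m w) i))\<^sup>2 else 0)" for j
  proof -
    have "(p j)\<^sup>2 = (\<Sum>i\<in>?C. (cmod (Pr S \<Delta> (run n m \<Delta> U (prefix_before j gs) \<psi>0) i))\<^sup>2)"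
      by (simp add: p_def nrm_def L2_sq)
    also have "\<dots> \<le> (\<Sum>i\<in>?C. if sampler_out n \<Delta> i \<in> S - \<Delta>
           then (cmod (run n m S U (sampler_gates \<Delta> j gs) (init n m w) i))\<^sup>2 else 0)"
    proof (rule sum_mono)
      fix i assume i: "i \<in> ?C"
      show "(cmod (Pr S \<Delta> (run n m \<Delta> U (prefix_before j gs) \<psi>0) i))\<^sup>2 \<le> (if sampler_out n \<Delta> i \<in> S - \<Delta>
           then (cmod (run n m S U (sampler_gates \<Delta> j gs) (init n m w) i))\<^sup>2 else 0)"
      proof (cases "fst i \<and> fst (snd i) \<in> S - \<Delta>")
        case True
        then have "sampler_out n \<Delta> i \<in> S - \<Delta>" by (simp add: sampler_out_def Let_def)
        then show ?thesis using True sampler_agree[OF i] by (simp add: Pr_def \<psi>0_def)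
      qed (auto simp: Pr_def)
    qed
    finally show ?thesis .
  qed
  have "(\<Sum>j<t. (1 / real t) * (p j)\<^sup>2) \<le> sampler_prob n m S U \<Delta> gs t w (S - \<Delta>)"
    unfolding sampler_prob_def using pj by (intro sum_mono mult_left_mono) auto
  moreover have "(\<Sum>j<t. (1 / real t) * (p j)\<^sup>2) = (1 / real t) * (\<Sum>j<t. (p j)\<^sup>2)"
    by (simp add: sum_distrib_left)
  moreover have "1 / (36 * (real t)\<^sup>2) \<le> (1 / real t) * (\<Sum>j<t. (p j)\<^sup>2)"
  proof -
    have "1 / (36 * (real t)\<^sup>2) = (1 / real t) * (1 / (36 * real t))" by (simp add: power2_eq_square)
    also have "\<dots> \<le> (1 / real t) * (\<Sum>j<t. (p j)\<^sup>2)" using cs by (intro mult_left_mono) auto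
    finally show ?thesis .
  qed
  ultimately show "sampler_prob n m S U \<Delta> gs t w (S - \<Delta>) \<ge> 1 / (36 * (real t)\<^sup>2)" by linarith
qed

end
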